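(* Let $1 \leq p < \infty$ and $w\in A_p$. Let $\varphi$ be a nonnegative function on $\mathbb{R}^n \times (0,\infty)$ such that $r \mapsto \varphi(a,r)$ is increasing for each $a\in \mathbb{R}^n$. Then there is a constant $C>0$, independent of $a\in\mathbb{R}^n$, $r>0$ and $\varphi$, such that for every ball $B(a,r)$, $$\varphi(a,r) \leq C\, w(B(a,r))^{\frac{1}{p}} \sup_{r < s < \infty} \frac{\varphi(a,s)}{w(B(a,s))^{\frac{1}{p}}}$$ and $$\varphi(a,r) \leq C\, w(B(a,r))^{\frac{1}{p}} \int_r^\infty \frac{\varphi(a,s)}{w(B(a,s))^{\frac{1}{p}}} \frac{ds}{s}.$$
   Context: $B(a,r)$ is the open ball of center $a$ and radius $r$, and $w(E)=\int_E w(x)\,dx$. A weight is a nonnegative locally integrable function on $\mathbb{R}^n$ with values in $(0,\infty)$ a.e. For $1<p<\infty$, $A_p$ is the set of weights $w$ with $\left(\frac{1}{|B|}\int_B w\right)\left(\frac{1}{|B|}\int_B w^{-\frac{1}{p-1}}\right)^{p-1}\le C$ for all balls $B$; $A_1$ is the set of weights with $\frac{1}{|B|}\int_B w\le C\|w\|_{L^\infty(B)}$ for all balls $B$ (as printed in the paper; equivalently used as $\frac{1}{|B|}\int_B w\cdot\|w^{-1}\|_{L^\infty(B)}\le C$). *)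

theory Defs
  imports "HOL-Analysis.Analysis"
begin

definition weight :: "('a::euclidean_space \<Rightarrow> real) \<Rightarrow> bool" where
  "weight w \<longleftrightarrow> (\<forall>x. 0 \<le> w x) \<and> (\<forall>K. compact K \<longrightarrow> set_integrable lebesgue K w)
     \<and> (AE x in lebesgue. 0 < w x)"

definition wmeasure :: "('a::euclidean_space \<Rightarrow> real) \<Rightarrow> 'a set \<Rightarrow> real" where
  "wmeasure w E = (LINT x:E|lebesgue. w x)"

text \<open>Muckenhoupt class A_1: average of w over B times the L-infinity norm of 1/w on B
  is bounded, i.e. avg_B w \<le> C w(x) for a.e. x in B.\<close>
definition A1 :: "('a::euclidean_space \<Rightarrow> real) \<Rightarrow> bool" where
  "A1 w \<longleftrightarrow> weight w \<and> (\<exists>C. \<forall>a r. 0 < r \<longrightarrow>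
     (AE x in lebesgue. x \<in> ball a r \<longrightarrow>
        wmeasure w (ball a r) / measure lebesgue (ball a r) \<le> C * w x))"

definition Ap_gt1 :: "real \<Rightarrow> ('a::euclidean_space \<Rightarrow> real) \<Rightarrow> bool" where
  "Ap_gt1 p w \<longleftrightarrow> weight w \<and> (\<exists>C. \<forall>a r. 0 < r \<longrightarrow>
     set_integrable lebesgue (ball a r) (\<lambda>x. w x powr (- 1 / (p - 1))) \<and>
     (wmeasure w (ball a r) / measure lebesgue (ball a r)) *
     ((LINT x:ball a r|lebesgue. w x powr (- 1 / (p - 1))) / measure lebesgue (ball a r))
        powr (p - 1) \<le> C)"

definition Ap :: "real \<Rightarrow> ('a::euclidean_space \<Rightarrow> real) \<Rightarrow> bool" where
  "Ap p w \<longleftrightarrow> (if p = 1 then A1 w else Ap_gt1 p w)"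

end

theory Submission
  imports Defs
begin

lemma set_int_pos:
  fixes f :: "'a::euclidean_space \<Rightarrow> real"
  assumes f: "set_integrable lebesgue S f" and S: "S \<in> sets lebesgue"
    and pos: "emeasure lebesgue S > 0" and fp: "AE x in lebesgue. x \<in> S \<longrightarrow> 0 < f x"
  shows "(LINT x:S|lebesgue. f x) > 0"
proof -
  define g where "g x = indicator S x * f x" for x
  have gi: "integrable lebesgue g" using f unfolding set_integrable_def g_def by simp
  have eq: "(LINT x:S|lebesgue. g x) = (LINT x:S|lebesgue. f x)"
    unfolding set_lebesgue_integral_def g_def by (auto intro!: Bochner_Integration.integral_cong simp: indicator_def)
  have ge: "(LINT x:S|lebesgue. f x) \<ge> 0"
    unfolding set_lebesgue_integral_def
    by (rule integral_nonneg_AE) (use fp in \<open>auto simp: indicator_def elim!: eventually_mono\<close>)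
  show ?thesis
  proof (rule ccontr)
    assume "\<not> ?thesis"
    with ge have "(LINT x:S|lebesgue. g x) = 0" using eq by simp
    then have "S \<in> null_sets lebesgue"
      by (intro null_if_pos_func_has_zero_int[OF gi S]) (use fp in \<open>auto simp: g_def elim!: eventually_mono\<close>)
    with pos show False by auto
  qed
qed

lemma weight_int:
  assumes "weight w" shows "set_integrable lebesgue (ball a r) w"
proof -
  have "set_integrable lebesgue (cball a r) w" using assms compact_cball unfolding weight_def by blast
  then show ?thesis by (rule set_integrable_subset) auto
qed

lemma ball_meas:
  assumes "0 \<le> r"
  shows "measure lebesgue (ball (a::'a::euclidean_space) r) = r ^ DIM('a) * measure lebesgue (ball (0::'a) 1)"
proof -
  have "emeasure lebesgue (ball (0::'a) 1) < \<infinity>"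
    using emeasure_bounded_finite[of "ball (0::'a) 1"] by simp
  then show ?thesis
    using emeasure_lebesgue_ball_conv_unit_ball[OF assms, of a]
    unfolding measure_def by (simp add: enn2real_mult assms)
qed

lemma ball1_pos: "measure lebesgue (ball (0::'a::euclidean_space) 1) > 0"
  using content_ball_pos[of 1 "0::'a"] by simp

lemma wpos:
  assumes "weight w" "0 < r" shows "wmeasure w (ball a r) > 0"
  unfolding wmeasure_def
proof (rule set_int_pos[OF weight_int[OF assms(1)]])
  show "ball a r \<in> sets lebesgue" by simp
  show "emeasure lebesgue (ball a r) > 0" using assms(2)
    using content_ball_pos[OF assms(2), of a] emeasure_lborel_ball_finite[of a r]
    by (simp add: emeasure_eq_ennreal_measure)
  show "AE x in lebesgue. x \<in> ball a r \<longrightarrow> 0 < w x" using assms(1) unfolding weight_def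
    by (auto elim!: eventually_mono)
qed

lemma set_int_subset_mono:
  fixes f :: "'a::euclidean_space \<Rightarrow> real"
  assumes f: "set_integrable lebesgue T f" and S: "S \<in> sets lebesgue" "S \<subseteq> T"
    and nn: "\<And>x. x \<in> T \<Longrightarrow> 0 \<le> f x"
  shows "(LINT x:S|lebesgue. f x) \<le> (LINT x:T|lebesgue. f x)"
proof -
  have fS: "set_integrable lebesgue S f" by (rule set_integrable_subset[OF f S])
  show ?thesis unfolding set_lebesgue_integral_def
    apply (rule integral_mono)
    using fS f apply (simp_all add: set_integrable_def)
    using S nn by (auto simp: indicator_def)
qed

lemma const_int: "set_integrable lebesgue (ball (a::'a::euclidean_space) r) (\<lambda>_. c::real)"
proof -
  have "integrable lebesgue (indicator (ball a r) :: _ \<Rightarrow> real)"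
    using emeasure_lborel_ball_finite[of a r] by (intro integrable_real_indicator) auto
  then show ?thesis unfolding set_integrable_def by (intro integrable_scaleR_left)
qed

lemma const_lint: "(LINT x:ball (a::'a::euclidean_space) r|lebesgue. (c::real)) = measure lebesgue (ball a r) * c"
  using emeasure_lborel_ball_finite[of a r] by (subst set_integral_const) auto

lemma meas_double:
  assumes "0 < r"
  shows "measure lebesgue (ball (a::'a::euclidean_space) (2*r)) = 2 ^ DIM('a) * measure lebesgue (ball a r)"
  using ball_meas[of "2*r" a] ball_meas[of r a] assms by (simp add: power_mult_distrib)

lemma meas_pos: "0 < r \<Longrightarrow> measure lebesgue (ball (a::'a::euclidean_space) r) > 0"
  using ball1_pos[where 'a='a] ball_meas[of r a] by simp

lemma doubling_A1:
  fixes w :: "'a::euclidean_space \<Rightarrow> real"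
  assumes "A1 w"
  shows "\<exists>D>0. \<forall>a r. 0 < r \<longrightarrow> wmeasure w (ball a (2*r)) \<le> D * wmeasure w (ball a r)"
proof -
  have W: "weight w" using assms unfolding A1_def by blast
  obtain C where C: "\<And>a r. 0 < r \<Longrightarrow> AE x in lebesgue. x \<in> ball a r \<longrightarrow>
        wmeasure w (ball a r) / measure lebesgue (ball a r) \<le> C * w x"
    using assms unfolding A1_def by blast
  show ?thesis
  proof (intro exI[of _ "max 1 (C * 2 ^ DIM('a))"] conjI allI impI)
    fix a :: 'a and r :: real assume r: "0 < r"
    define B where "B = ball a (2*r)"
    define E where "E = ball a r"
    have EB: "E \<subseteq> B" using r by (auto simp: E_def B_def)
    have mB: "measure lebesgue B = 2 ^ DIM('a) * measure lebesgue E"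
      unfolding B_def E_def using meas_double[OF r] .
    have mE: "measure lebesgue E > 0" unfolding E_def using meas_pos[OF r] .
    have wE: "wmeasure w E > 0" unfolding E_def using wpos[OF W r] .
    have ae: "AE x in lebesgue. x \<in> E \<longrightarrow> wmeasure w B / measure lebesgue B \<le> C * w x"
      using C[of "2*r" a] r EB unfolding B_def by (auto elim!: eventually_mono)
    have "(LINT x:E|lebesgue. wmeasure w B / measure lebesgue B) \<le> (LINT x:E|lebesgue. C * w x)"
      apply (rule set_integral_mono_AE)
      using const_int weight_int[OF W] ae unfolding E_def by auto
    then have "measure lebesgue E * (wmeasure w B / measure lebesgue B) \<le> C * wmeasure w E"
      unfolding E_def const_lint wmeasure_def by simp
    then have "wmeasure w B / 2 ^ DIM('a) \<le> C * wmeasure w E"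
      using mE unfolding mB by (simp add: field_simps)
    then have "wmeasure w B \<le> (C * 2 ^ DIM('a)) * wmeasure w E"
      by (simp add: field_simps)
    also have "\<dots> \<le> max 1 (C * 2 ^ DIM('a)) * wmeasure w E"
      using wE by (intro mult_right_mono) auto
    finally show "wmeasure w (ball a (2*r)) \<le> max 1 (C * 2 ^ DIM('a)) * wmeasure w (ball a r)"
      unfolding B_def E_def .
  qed simp
qed

lemma young_pt:
  fixes p wx s u sx :: real
  assumes p: "1 < p" and wx: "0 < wx" and u: "0 < u" and s: "0 < s"
  shows "u powr (-1/p) * s powr (-(p-1)/p) \<le> (1/p) * (wx / u) + (1 - 1/p) * (wx powr (-1/(p-1)) / s)"
proof -
  define sx where "sx = wx powr (-1/(p-1))"
  have sx: "0 < sx" using wx by (simp add: sx_def)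
  have "(wx / u) powr (1/p) * (sx / s) powr (1 - 1/p) \<le> (1/p) * (wx / u) + (1 - 1/p) * (sx / s)"
    using p wx u s sx by (intro Youngs_inequality_0) auto
  moreover have "(wx / u) powr (1/p) * (sx / s) powr (1 - 1/p) = u powr (-1/p) * s powr (-(p-1)/p)"
  proof -
    have e1: "sx powr (1 - 1/p) = wx powr (-1/p)"
      unfolding sx_def using p by (simp add: powr_powr field_simps)
    have e2: "wx powr (1/p) * wx powr (-1/p) = 1"
      using wx by (simp add: powr_add[symmetric])
    have e3: "u powr (-1/p) = 1 / u powr (1/p)" using u by (simp add: powr_minus_divide)
    have e4: "s powr (-(p-1)/p) = 1 / s powr (1 - 1/p)"
    proof -
      have "-(p-1)/p = - (1 - 1/p)" using p by (simp add: field_simps)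
      then show ?thesis using s powr_minus_divide[of s "1 - 1/p"] by simp
    qed
    show ?thesis
      using wx u s sx e1 e2 unfolding e3 e4
      by (simp add: powr_divide field_simps)
  qed
  ultimately show ?thesis unfolding sx_def by simp
qed

lemma alg_Ap:
  fixes p mE mB uE sB vB C k :: real
  assumes p: "1 < p" and mE: "0 < mE" and uE: "0 < uE" and sB: "0 < sB" and vB: "0 \<le> vB"
    and k: "0 < k" and mB: "mB = k * mE"
    and H1: "uE powr (-1/p) * sB powr (-(p-1)/p) * mE \<le> 1"
    and H2: "(vB / mB) * (sB / mB) powr (p-1) \<le> C"
  shows "vB \<le> C * k powr p * uE"
proof -
  have mBp: "0 < mB" using mB k mE by simp
  have a: "uE powr (-1/p) = 1 / uE powr (1/p)" using uE powr_minus_divide[of uE "1/p"] by simp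
  have b: "sB powr (-(p-1)/p) = 1 / sB powr ((p-1)/p)"
  proof -
    have "-(p-1)/p = - ((p-1)/p)" using p by (simp add: field_simps)
    then show ?thesis using sB powr_minus_divide[of sB "(p-1)/p"] by simp
  qed
  have m1: "mE \<le> uE powr (1/p) * sB powr ((p-1)/p)"
    using H1 uE sB unfolding a b by (simp add: field_simps)
  have "mE powr p \<le> (uE powr (1/p) * sB powr ((p-1)/p)) powr p"
    using m1 mE p by (intro powr_mono2) auto
  also have "\<dots> = uE * sB powr (p-1)"
    using uE sB p by (simp add: powr_mult powr_powr)
  finally have m2: "mE powr p \<le> uE * sB powr (p-1)" .
  have "vB * sB powr (p-1) = ((vB / mB) * (sB / mB) powr (p-1)) * (mB * mB powr (p-1))"
    using mBp sB by (simp add: powr_divide field_simps)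
  also have "\<dots> \<le> C * (mB * mB powr (p-1))"
    using H2 mBp by (intro mult_right_mono) auto
  also have "mB * mB powr (p-1) = mB powr p"
    using mBp powr_add[of mB 1 "p-1"] by simp
  also have "mB powr p = k powr p * mE powr p" unfolding mB using k mE by (simp add: powr_mult)
  finally have h2: "vB * sB powr (p-1) \<le> C * (k powr p * mE powr p)" .
  have "vB * mE powr p \<le> vB * (uE * sB powr (p-1))"
    using m2 vB by (intro mult_left_mono) auto
  also have "\<dots> = uE * (vB * sB powr (p-1))" by simp
  also have "\<dots> \<le> uE * (C * (k powr p * mE powr p))"
    using h2 uE by (intro mult_left_mono) auto
  finally have "vB * mE powr p \<le> (C * k powr p * uE) * mE powr p" by (simp add: ac_simps)
  then show ?thesis using mE by simp
qed

lemma doubling_Ap: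
  fixes w :: "'a::euclidean_space \<Rightarrow> real"
  assumes p: "1 < p" and A: "Ap_gt1 p w"
  shows "\<exists>D>0. \<forall>a r. 0 < r \<longrightarrow> wmeasure w (ball a (2*r)) \<le> D * wmeasure w (ball a r)"
proof -
  have W: "weight w" using A unfolding Ap_gt1_def by blast
  obtain C where C: "\<And>a r. 0 < r \<Longrightarrow>
     set_integrable lebesgue (ball a r) (\<lambda>x. w x powr (- 1 / (p - 1))) \<and>
     (wmeasure w (ball a r) / measure lebesgue (ball a r)) *
     ((LINT x:ball a r|lebesgue. w x powr (- 1 / (p - 1))) / measure lebesgue (ball a r))
        powr (p - 1) \<le> C"
    using A unfolding Ap_gt1_def by blast
  define k :: real where "k = 2 ^ DIM('a)"
  have k: "0 < k" unfolding k_def by simp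
  show ?thesis
  proof (intro exI[of _ "max 1 (C * k powr p)"] conjI allI impI)
    fix a :: 'a and r :: real assume r: "0 < r"
    define B where "B = ball a (2*r)"
    define E where "E = ball a r"
    define \<sigma> where "\<sigma> x = w x powr (- 1 / (p - 1))" for x
    have EB: "E \<subseteq> B" using r by (auto simp: E_def B_def)
    have r2: "0 < 2*r" using r by simp
    have mB: "measure lebesgue B = k * measure lebesgue E"
      unfolding B_def E_def k_def using meas_double[OF r] .
    have mE: "measure lebesgue E > 0" unfolding E_def using meas_pos[OF r] .
    have wE: "wmeasure w E > 0" unfolding E_def using wpos[OF W r] .
    have wB: "wmeasure w B > 0" unfolding B_def using wpos[OF W r2] .
    have sI: "set_integrable lebesgue B \<sigma>" using C[OF r2] unfolding B_def \<sigma>_def by blast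
    have H2: "(wmeasure w B / measure lebesgue B) *
     ((LINT x:B|lebesgue. \<sigma> x) / measure lebesgue B) powr (p - 1) \<le> C"
      using C[OF r2] unfolding B_def \<sigma>_def by blast
    have wpos_ae: "AE x in lebesgue. 0 < w x" using W unfolding weight_def by blast
    have sB: "(LINT x:B|lebesgue. \<sigma> x) > 0"
    proof (rule set_int_pos[OF sI])
      show "B \<in> sets lebesgue" unfolding B_def by simp
      show "emeasure lebesgue B > 0"
        using content_ball_pos[OF r2, of a] emeasure_lborel_ball_finite[of a "2*r"]
        by (simp add: emeasure_eq_ennreal_measure B_def)
      show "AE x in lebesgue. x \<in> B \<longrightarrow> 0 < \<sigma> x"
        using wpos_ae by (auto simp: \<sigma>_def elim!: eventually_mono)
    qed
    define sB where "sB = (LINT x:B|lebesgue. \<sigma> x)"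
    define uE where "uE = wmeasure w E"
    define K where "K = uE powr (-1/p) * sB powr (-(p-1)/p)"
    have sIE: "set_integrable lebesgue E \<sigma>"
      by (rule set_integrable_subset[OF sI _ EB]) (simp add: E_def)
    have wIE: "set_integrable lebesgue E w" unfolding E_def by (rule weight_int[OF W])
    have sE: "(LINT x:E|lebesgue. \<sigma> x) \<le> sB"
      unfolding sB_def by (rule set_int_subset_mono[OF sI _ EB]) (auto simp: E_def \<sigma>_def)
    have ae: "AE x in lebesgue. x \<in> E \<longrightarrow> K \<le> (1/(p*uE)) * w x + ((1 - 1/p)/sB) * \<sigma> x"
      using wpos_ae
    proof (rule eventually_mono)
      fix x assume "0 < w x"
      then have "K \<le> (1/p) * (w x / uE) + (1 - 1/p) * (\<sigma> x / sB)"
        unfolding K_def \<sigma>_def using young_pt[OF p _ wE sB] by (simp add: uE_def sB_def)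
      then show "x \<in> E \<longrightarrow> K \<le> (1/(p*uE)) * w x + ((1 - 1/p)/sB) * \<sigma> x"
        by (simp add: field_simps)
    qed
    have "(LINT x:E|lebesgue. K) \<le> (LINT x:E|lebesgue. (1/(p*uE)) * w x + ((1 - 1/p)/sB) * \<sigma> x)"
      apply (rule set_integral_mono_AE)
      using const_int sIE wIE ae unfolding E_def by auto
    also have "\<dots> = (1/(p*uE)) * (LINT x:E|lebesgue. w x) + ((1 - 1/p)/sB) * (LINT x:E|lebesgue. \<sigma> x)"
      using sIE wIE by (simp add: set_integral_add)
    also have "\<dots> \<le> (1/p) + (1 - 1/p)"
    proof -
      have "(1/(p*uE)) * (LINT x:E|lebesgue. w x) = 1/p"
        using wE p unfolding uE_def wmeasure_def by (simp add: field_simps)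
      moreover have "((1 - 1/p)/sB) * (LINT x:E|lebesgue. \<sigma> x) \<le> 1 - 1/p"
      proof -
        have "(LINT x:E|lebesgue. \<sigma> x) / sB \<le> 1" using sE sB unfolding sB_def by simp
        moreover have "0 \<le> 1 - 1/p" using p by simp
        ultimately show ?thesis using mult_left_mono[of "(LINT x:E|lebesgue. \<sigma> x) / sB" 1 "1 - 1/p"]
          by (simp add: field_simps)
      qed
      ultimately show ?thesis by simp
    qed
    finally have H1: "K * measure lebesgue E \<le> 1"
      unfolding E_def const_lint by (simp add: mult.commute)
    have "wmeasure w B \<le> C * k powr p * uE"
      apply (rule alg_Ap[OF p mE _ _ _ k mB])
      using wE sB wB H1 H2 by (auto simp: uE_def sB_def K_def)
    also have "\<dots> \<le> max 1 (C * k powr p) * uE"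
      using wE by (intro mult_right_mono) (auto simp: uE_def)
    finally show "wmeasure w (ball a (2*r)) \<le> max 1 (C * k powr p) * wmeasure w (ball a r)"
      unfolding B_def E_def uE_def .
  qed simp
qed

lemma doubling:
  fixes w :: "'a::euclidean_space \<Rightarrow> real"
  assumes "1 \<le> p" "Ap p w"
  shows "\<exists>D>0. \<forall>a r. 0 < r \<longrightarrow> wmeasure w (ball a (2*r)) \<le> D * wmeasure w (ball a r)"
proof (cases "p = 1")
  case True
  then show ?thesis using assms doubling_A1 unfolding Ap_def by auto
next
  case False
  then show ?thesis using assms doubling_Ap[of p w] unfolding Ap_def by auto
qed

lemma Ap_weight: "Ap p w \<Longrightarrow> weight w"
  unfolding Ap_def A1_def Ap_gt1_def by (auto split: if_splits)

lemma wmono: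
  assumes W: "weight w" and "s \<le> t"
  shows "wmeasure w (ball a s) \<le> wmeasure w (ball a t)"
  unfolding wmeasure_def
  by (rule set_int_subset_mono[OF weight_int[OF W]]) (use assms in \<open>auto simp: weight_def\<close>)

theorem lemma2p11:
  fixes p :: real and w :: "'a::euclidean_space \<Rightarrow> real"
  assumes "1 \<le> p" and "Ap p w"
  shows "\<exists>C>0. \<forall>\<phi> :: 'a \<Rightarrow> real \<Rightarrow> real.
    (\<forall>a s. 0 < s \<longrightarrow> 0 \<le> \<phi> a s) \<longrightarrow>
    (\<forall>a s t. 0 < s \<longrightarrow> s \<le> t \<longrightarrow> \<phi> a s \<le> \<phi> a t) \<longrightarrow>
    (\<forall>a r. 0 < r \<longrightarrow>
      ennreal (\<phi> a r) \<le> ennreal C * ennreal (wmeasure w (ball a r) powr (1 / p)) *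
        (SUP s\<in>{r<..}. ennreal (\<phi> a s / wmeasure w (ball a s) powr (1 / p)))
      \<and>
      ennreal (\<phi> a r) \<le> ennreal C * ennreal (wmeasure w (ball a r) powr (1 / p)) *
        (\<integral>\<^sup>+ s. indicator {r<..} s *
           ennreal (\<phi> a s / wmeasure w (ball a s) powr (1 / p) / s) \<partial>lborel))"
proof -
  have W: "weight w" using Ap_weight[OF assms(2)] .
  obtain D where D: "D > 0" "\<And>a r. 0 < r \<Longrightarrow> wmeasure w (ball a (2*r)) \<le> D * wmeasure w (ball a r)"
    using doubling[OF assms] by blast
  have p: "0 < p" using assms(1) by simp
  define C where "C = 2 * D powr (1/p)"
  have Cp: "C > 0" using D by (simp add: C_def)
  show ?thesis
  proof (intro exI[of _ C] conjI Cp allI impI)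
    fix \<phi> :: "'a \<Rightarrow> real \<Rightarrow> real" and a :: 'a and r :: real
    assume nn: "\<forall>a s. 0 < s \<longrightarrow> 0 \<le> \<phi> a s"
      and mono: "\<forall>a s t. 0 < s \<longrightarrow> s \<le> t \<longrightarrow> \<phi> a s \<le> \<phi> a t"
      and r: "0 < r"
    define u where "u = wmeasure w (ball a r)"
    define t where "t = \<phi> a r"
    have u: "0 < u" unfolding u_def using wpos[OF W r] .
    have t: "0 \<le> t" unfolding t_def using nn r by auto
    define U where "U = (D * u) powr (1/p)"
    have U: "0 < U" using D u by (simp add: U_def)
    have U': "U = D powr (1/p) * u powr (1/p)" unfolding U_def using D u by (simp add: powr_mult)
    have key: "t / U \<le> \<phi> a s / wmeasure w (ball a s) powr (1 / p)" if s: "r < s" "s \<le> 2*r" for s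
    proof -
      have s0: "0 < s" using s r by simp
      have ws: "0 < wmeasure w (ball a s)" using wpos[OF W s0] .
      have "wmeasure w (ball a s) \<le> D * u"
        using wmono[OF W s(2), of a] D(2)[OF r, of a] unfolding u_def by linarith
      then have "wmeasure w (ball a s) powr (1/p) \<le> U"
        unfolding U_def using ws p by (intro powr_mono2) auto
      moreover have "t \<le> \<phi> a s" unfolding t_def using mono r s by auto
      ultimately show ?thesis
        using ws t by (intro frac_le) auto
    qed
    have keyv: "t \<le> C * u powr (1/p) * (t / U)"
    proof -
      have "C * u powr (1/p) * (t / U) = 2 * t"
        using U u D unfolding C_def U' by (simp add: field_simps)
      then show ?thesis using t by simp
    qed
    show "ennreal (\<phi> a r) \<le> ennreal C * ennreal (wmeasure w (ball a r) powr (1 / p)) *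
        (SUP s\<in>{r<..}. ennreal (\<phi> a s / wmeasure w (ball a s) powr (1 / p)))"
    proof -
      have "ennreal (t / U) \<le> ennreal (\<phi> a (2*r) / wmeasure w (ball a (2*r)) powr (1 / p))"
        using key[of "2*r"] r by (intro ennreal_leI) auto
      also have "\<dots> \<le> (SUP s\<in>{r<..}. ennreal (\<phi> a s / wmeasure w (ball a s) powr (1 / p)))"
        using r by (intro SUP_upper) auto
      finally have "ennreal C * ennreal (u powr (1 / p)) * ennreal (t / U) \<le>
          ennreal C * ennreal (u powr (1 / p)) * (SUP s\<in>{r<..}. ennreal (\<phi> a s / wmeasure w (ball a s) powr (1 / p)))"
        by (intro mult_left_mono) auto
      moreover have "ennreal t \<le> ennreal C * ennreal (u powr (1 / p)) * ennreal (t / U)"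
        using keyv Cp t U by (simp add: ennreal_mult[symmetric] ennreal_leI)
      ultimately show ?thesis unfolding t_def u_def by (rule order_trans[rotated])
    qed
    show "ennreal (\<phi> a r) \<le> ennreal C * ennreal (wmeasure w (ball a r) powr (1 / p)) *
        (\<integral>\<^sup>+ s. indicator {r<..} s *
           ennreal (\<phi> a s / wmeasure w (ball a s) powr (1 / p) / s) \<partial>lborel)"
    proof -
      define c where "c = t / U / (2*r)"
      have c: "0 \<le> c" using t U r by (simp add: c_def)
      have "(\<integral>\<^sup>+ s. ennreal c * indicator {r<..2*r} s \<partial>lborel) \<le>
          (\<integral>\<^sup>+ s. indicator {r<..} s * ennreal (\<phi> a s / wmeasure w (ball a s) powr (1 / p) / s) \<partial>lborel)"
      proof (rule nn_integral_mono)
        fix s :: real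
        show "ennreal c * indicator {r<..2*r} s \<le>
            indicator {r<..} s * ennreal (\<phi> a s / wmeasure w (ball a s) powr (1 / p) / s)"
        proof (cases "s \<in> {r<..2*r}")
          case True
          then have s: "r < s" "s \<le> 2*r" by auto
          have "c \<le> \<phi> a s / wmeasure w (ball a s) powr (1 / p) / s"
            unfolding c_def
          proof (rule frac_le)
            show "0 \<le> \<phi> a s / wmeasure w (ball a s) powr (1 / p)"
              using nn s r by simp
            show "t / U \<le> \<phi> a s / wmeasure w (ball a s) powr (1 / p)" using key[OF s] .
          qed (use s r in auto)
          then show ?thesis using True by (simp add: ennreal_leI)
        qed simp
      qed
      also have "(\<integral>\<^sup>+ s. ennreal c * indicator {r<..2*r} s \<partial>lborel) = ennreal (c * r)"
        using r c by (simp add: nn_integral_cmult_indicator ennreal_mult)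
      finally have I: "ennreal (c * r) \<le> (\<integral>\<^sup>+ s. indicator {r<..} s * ennreal (\<phi> a s / wmeasure w (ball a s) powr (1 / p) / s) \<partial>lborel)" .
      have "t = C * u powr (1/p) * (c * r)"
        using U u D r unfolding C_def U' c_def by (simp add: field_simps)
      then have "ennreal t = ennreal C * ennreal (u powr (1 / p)) * ennreal (c * r)"
        using Cp c r by (simp add: ennreal_mult[symmetric])
      also have "\<dots> \<le> ennreal C * ennreal (u powr (1 / p)) * (\<integral>\<^sup>+ s. indicator {r<..} s * ennreal (\<phi> a s / wmeasure w (ball a s) powr (1 / p) / s) \<partial>lborel)"
        using I by (intro mult_left_mono) auto
      finally show ?thesis unfolding t_def u_def .
    qed
  qed
qed

end
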